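(* Let $\mathcal{M}$, $\pi_b$, $\pi_e$ be as in the context, and assume the reward decomposition (R), the transition factorisation (P), the policy factorisation (F) for both $\pi_b$ and $\pi_e$, and factor-wise absolute continuity (AC). Let $\mathcal{D}=\{\tau^{(n)}\}_{n=1}^N$ consist of $N$ independent trajectories generated by $\pi_b$. Then the decomposed IS estimator $$\hat Q^{DecIS}_{\pi_e}=\sum_{d=1}^{D}\frac1N\sum_{n=1}^N\sum_{t=0}^{T}\gamma^t\,\rho^{(n),d}_{0:T}\,r^d(z^{(n),d}_t,a^{(n),d}_t)$$ and the decomposed per-decision IS estimator $$\hat Q^{DecPDIS}_{\pi_e}=\sum_{d=1}^{D}\frac1N\sum_{n=1}^N\sum_{t=0}^{T}\gamma^t\,\rho^{(n),d}_{0:t}\,r^d(z^{(n),d}_t,a^{(n),d}_t)$$ are both unbiased estimators of $V_{\pi_e}=\mathbb{E}_{\pi_e}\big[\sum_{t=0}^T\gamma^t r(s_t,a_t)\big]$, i.e. $\mathbb{E}_{\pi_b}[\hat Q^{DecIS}_{\pi_e}]=\mathbb{E}_{\pi_b}[\hat Q^{DecPDIS}_{\pi_e}]=V_{\pi_e}$.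
   Context: A finite-horizon MDP has finite state space $\mathcal{S}$, action space $\mathcal{A}=\mathcal{A}^1\times\cdots\times\mathcal{A}^D$ (finite), so each action is $a=(a^1,\dots,a^D)$ with $a^d\in\mathcal{A}^d$; transition kernel $p(\cdot\mid s,a)$, a deterministic reward function $r:\mathcal{S}\times\mathcal{A}\to\mathbb{R}$, initial state distribution $d_1$, discount $\gamma\in[0,1]$ and horizon $T$. A (stationary) policy $\pi$ gives a distribution $\pi(\cdot\mid s)$ on $\mathcal{A}$. A trajectory under $\pi$ is $s_0\sim d_1$, $a_t\sim\pi(\cdot\mid s_t)$, $s_{t+1}\sim p(\cdot\mid s_t,a_t)$ for $t=0,\dots,T$; $\mathbb{E}_\pi$ denotes expectation over such trajectories. There is a state abstraction map $\phi(s)=(z^1,\dots,z^D)$ with $z^d\in\mathcal{Z}^d$ (finite), and we write $z^d_t$ for the $d$-th component of $\phi(s_t)$. Standing factorisation assumptions: (R) $r(s,a)=\sum_{d=1}^D r^d(z^d,a^d)$ for functions $r^d:\mathcal{Z}^d\times\mathcal{A}^d\to\mathbb{R}$, where $\phi(s)=(z^1,\dots,z^D)$; (P) for all $s,s',a$: $\sum_{\tilde s\in\phi^{-1}(\phi(s'))}p(\tilde s\mid s,a)=\prod_{d=1}^D p^d(z'^d\mid z^d,a^d)$ for sub-transition kernels $p^d$ on $\mathcal{Z}^d$, where $\phi(s')=(z'^1,\dots,z'^D)$; (F) a policy $\pi$ is factored if $\pi(a\mid s)=\prod_{d=1}^D\pi^d(a^d\mid z^d)$ for sub-policies $\pi^d(\cdot\mid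 z^d)$ on $\mathcal{A}^d$. (AC) For all $d$, $z^d$, $a^d$: if $\pi_b^d(a^d\mid z^d)=0$ then $\pi_e^d(a^d\mid z^d)=0$. For trajectory $n$ with sub-actions $a^{(n),d}_t$ and abstract states $z^{(n),d}_t$, the factor-$d$ importance ratio is $\rho^{(n),d}_{0:t}=\prod_{t'=0}^{t}\frac{\pi_e^d(a^{(n),d}_{t'}\mid z^{(n),d}_{t'})}{\pi_b^d(a^{(n),d}_{t'}\mid z^{(n),d}_{t'})}$. *)

theory Defs
  imports "HOL-Probability.Probability"
begin

(* A trajectory is the list [(s_0,a_0),...,(s_T,a_T)] (length T+1).
   rollout p pol n s: starting in state s, sample a ~ pol s, then s' ~ p s a, ... *)
fun rollout :: "('s \<Rightarrow> 'a \<Rightarrow> 's pmf) \<Rightarrow> ('s \<Rightarrow> 'a pmf) \<Rightarrow> nat \<Rightarrow> 's \<Rightarrow> ('s \<times> 'a) list pmf" where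
  "rollout p pol 0 s = map_pmf (\<lambda>a. [(s, a)]) (pol s)"
| "rollout p pol (Suc n) s =
     bind_pmf (pol s) (\<lambda>a. bind_pmf (p s a) (\<lambda>s'.
       map_pmf (\<lambda>rest. (s, a) # rest) (rollout p pol n s')))"

definition traj :: "'s pmf \<Rightarrow> ('s \<Rightarrow> 'a \<Rightarrow> 's pmf) \<Rightarrow> ('s \<Rightarrow> 'a pmf) \<Rightarrow> nat \<Rightarrow> ('s \<times> 'a) list pmf" where
  "traj d1 p pol T = bind_pmf d1 (rollout p pol T)"

definition value_fn :: "'s pmf \<Rightarrow> ('s \<Rightarrow> 'a \<Rightarrow> 's pmf) \<Rightarrow> ('s \<Rightarrow> 'a \<Rightarrow> real) \<Rightarrow> real \<Rightarrow> nat
    \<Rightarrow> ('s \<Rightarrow> 'a pmf) \<Rightarrow> real" where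
  "value_fn d1 p r \<gamma> T pol = measure_pmf.expectation (traj d1 p pol T)
     (\<lambda>\<tau>. \<Sum>t\<le>T. \<gamma> ^ t * r (fst (\<tau> ! t)) (snd (\<tau> ! t)))"

(* factor-d importance ratio rho^d_{0:t} of a trajectory tau;
   actions are functions 'd => 'b, abstract states phi s :: 'd => 'z *)
definition ratio :: "('d \<Rightarrow> 'z \<Rightarrow> 'b pmf) \<Rightarrow> ('d \<Rightarrow> 'z \<Rightarrow> 'b pmf) \<Rightarrow> ('s \<Rightarrow> 'd \<Rightarrow> 'z)
    \<Rightarrow> ('s \<times> ('d \<Rightarrow> 'b)) list \<Rightarrow> 'd \<Rightarrow> nat \<Rightarrow> real" where
  "ratio pib pie \<phi> \<tau> d t = (\<Prod>t'\<le>t.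
      pmf (pie d (\<phi> (fst (\<tau> ! t')) d)) (snd (\<tau> ! t') d) /
      pmf (pib d (\<phi> (fst (\<tau> ! t')) d)) (snd (\<tau> ! t') d))"

definition DecIS :: "('d::finite \<Rightarrow> 'z \<Rightarrow> 'b pmf) \<Rightarrow> ('d \<Rightarrow> 'z \<Rightarrow> 'b pmf) \<Rightarrow> ('s \<Rightarrow> 'd \<Rightarrow> 'z)
    \<Rightarrow> ('d \<Rightarrow> 'z \<Rightarrow> 'b \<Rightarrow> real) \<Rightarrow> real \<Rightarrow> nat \<Rightarrow> nat
    \<Rightarrow> (nat \<Rightarrow> ('s \<times> ('d \<Rightarrow> 'b)) list) \<Rightarrow> real" where
  "DecIS pib pie \<phi> rd \<gamma> T N Ds = (\<Sum>d\<in>UNIV. 1 / real N * (\<Sum>n<N. \<Sum>t\<le>T.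
      \<gamma> ^ t * ratio pib pie \<phi> (Ds n) d T *
      rd d (\<phi> (fst (Ds n ! t)) d) (snd (Ds n ! t) d)))"

definition DecPDIS :: "('d::finite \<Rightarrow> 'z \<Rightarrow> 'b pmf) \<Rightarrow> ('d \<Rightarrow> 'z \<Rightarrow> 'b pmf) \<Rightarrow> ('s \<Rightarrow> 'd \<Rightarrow> 'z)
    \<Rightarrow> ('d \<Rightarrow> 'z \<Rightarrow> 'b \<Rightarrow> real) \<Rightarrow> real \<Rightarrow> nat \<Rightarrow> nat
    \<Rightarrow> (nat \<Rightarrow> ('s \<times> ('d \<Rightarrow> 'b)) list) \<Rightarrow> real" where
  "DecPDIS pib pie \<phi> rd \<gamma> T N Ds = (\<Sum>d\<in>UNIV. 1 / real N * (\<Sum>n<N. \<Sum>t\<le>T.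
      \<gamma> ^ t * ratio pib pie \<phi> (Ds n) d t *
      rd d (\<phi> (fst (Ds n ! t)) d) (snd (Ds n ! t) d)))"

end

theory Submission imports Defs begin

lemma fin_rollout:
  fixes pol :: "'s::finite \<Rightarrow> 'a::finite pmf"
  shows "finite (set_pmf (rollout p pol n s))"
  by (induction n arbitrary: s) (auto simp: set_bind_pmf)

lemma len_rollout: "\<tau> \<in> set_pmf (rollout p pol n s) \<Longrightarrow> length \<tau> = Suc n"
  by (induction n arbitrary: s \<tau>) (auto simp: set_bind_pmf)

lemma exp_cong: "(\<And>x. x \<in> set_pmf M \<Longrightarrow> f x = g x) \<Longrightarrow>
   measure_pmf.expectation M f = measure_pmf.expectation M (g :: _ \<Rightarrow> real)"
  by (rule integral_cong_AE) (auto simp: AE_measure_pmf_iff)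

definition W :: "('z \<Rightarrow> 'b pmf) \<Rightarrow> ('z \<Rightarrow> 'b pmf) \<Rightarrow> ('z \<times> 'b) list \<Rightarrow> nat \<Rightarrow> real" where
  "W mb me \<sigma> k = (\<Prod>t\<le>k. pmf (me (fst (\<sigma>!t))) (snd (\<sigma>!t)) / pmf (mb (fst (\<sigma>!t))) (snd (\<sigma>!t)))"

lemma W_Cons_0: "W mb me (x # rest) 0 = pmf (me (fst x)) (snd x) / pmf (mb (fst x)) (snd x)"
  by (simp add: W_def)

lemma W_Cons_Suc: "W mb me (x # rest) (Suc k) = pmf (me (fst x)) (snd x) / pmf (mb (fst x)) (snd x) * W mb me rest k"
  unfolding W_def by (subst prod.atMost_Suc_shift) simp

lemma IS:
  fixes q :: "'z::finite \<Rightarrow> 'b::finite \<Rightarrow> 'z pmf" and mb me :: "'z \<Rightarrow> 'b pmf"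
  assumes AC: "\<And>z b. pmf (mb z) b = 0 \<Longrightarrow> pmf (me z) b = 0"
  shows "k \<le> n \<Longrightarrow> measure_pmf.expectation (rollout q mb n z) (\<lambda>\<sigma>. W mb me \<sigma> k * g (take (Suc k) \<sigma>))
        = measure_pmf.expectation (rollout q me n z) (\<lambda>\<sigma>. g (take (Suc k) \<sigma>))"
proof (induction n arbitrary: z k g)
  case 0
  then have k: "k = 0" by simp
  have "measure_pmf.expectation (mb z) (\<lambda>b. pmf (me z) b / pmf (mb z) b * g [(z,b)])
      = measure_pmf.expectation (me z) (\<lambda>b. g [(z,b)])"
    apply (subst integral_measure_pmf_real[where A=UNIV], simp, simp)+
    apply (rule sum.cong, simp)
    subgoal for b using AC[of z b] by (cases "pmf (mb z) b = 0") auto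
    done
  then show ?case using k by (simp add: W_Cons_0)
next
  case (Suc n)
  define rt where "rt b = pmf (me z) b / pmf (mb z) b" for b
  have inner: "measure_pmf.expectation (rollout q mb n z')
        (\<lambda>rest. W mb me ((z,b) # rest) k * g (take (Suc k) ((z,b) # rest)))
      = rt b * measure_pmf.expectation (rollout q me n z') (\<lambda>rest. g (take (Suc k) ((z,b) # rest)))" for b z'
  proof (cases k)
    case 0
    then show ?thesis by (simp add: W_Cons_0 rt_def)
  next
    case (Suc k')
    have "measure_pmf.expectation (rollout q mb n z')
        (\<lambda>rest. W mb me ((z,b) # rest) k * g (take (Suc k) ((z,b) # rest)))
       = measure_pmf.expectation (rollout q mb n z')
        (\<lambda>rest. rt b * (W mb me rest k' * (\<lambda>l. g ((z,b) # l)) (take (Suc k') rest)))"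
      using Suc by (simp add: W_Cons_Suc rt_def mult.assoc)
    also have "\<dots> = rt b * measure_pmf.expectation (rollout q mb n z')
        (\<lambda>rest. W mb me rest k' * (\<lambda>l. g ((z,b) # l)) (take (Suc k') rest))"
      by simp
    also have "\<dots> = rt b * measure_pmf.expectation (rollout q me n z')
        (\<lambda>rest. (\<lambda>l. g ((z,b) # l)) (take (Suc k') rest))"
      using Suc.IH[of k' z' "\<lambda>l. g ((z,b) # l)"] Suc.prems \<open>k = Suc k'\<close> by simp
    finally show ?thesis using \<open>k = Suc k'\<close> by simp
  qed
  have inner2: "measure_pmf.expectation (map_pmf (\<lambda>rest. (z,b) # rest) (rollout q mb n z'))
        (\<lambda>\<sigma>. W mb me \<sigma> k * g (take (Suc k) \<sigma>))
      = rt b * measure_pmf.expectation (map_pmf (\<lambda>rest. (z,b) # rest) (rollout q me n z'))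
         (\<lambda>\<sigma>. g (take (Suc k) \<sigma>))" for b z'
    unfolding integral_map_pmf by (rule inner)
  have fin: "finite (set_pmf (bind_pmf (q z b) (\<lambda>z'. map_pmf (\<lambda>rest. (z, b) # rest) (rollout q pol n z'))))"
    for b and pol :: "'z \<Rightarrow> 'b pmf"
    by (auto simp: set_bind_pmf fin_rollout)
  define Y where "Y b = (\<Sum>z'\<in>UNIV. pmf (q z b) z' * measure_pmf.expectation (rollout q me n z')
       (\<lambda>rest. g (take (Suc k) ((z,b) # rest))))" for b
  have "measure_pmf.expectation (rollout q mb (Suc n) z) (\<lambda>\<sigma>. W mb me \<sigma> k * g (take (Suc k) \<sigma>))
      = (\<Sum>b\<in>UNIV. pmf (mb z) b * (rt b * Y b))"
    apply simp
    apply (subst pmf_expectation_bind[where A=UNIV], simp, rule fin, simp)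
    apply (rule sum.cong, simp)
    apply (subst pmf_expectation_bind[where A=UNIV], simp, simp add: fin_rollout, simp)
    apply (simp only: inner2 Y_def real_scaleR_def sum_distrib_left)
    apply (simp add: mult_ac)
    done
  also have "\<dots> = (\<Sum>b\<in>UNIV. pmf (me z) b * Y b)"
    apply (rule sum.cong, simp)
    subgoal for b using AC[of z b] unfolding rt_def by (cases "pmf (mb z) b = 0") auto
    done
  also have "\<dots> = measure_pmf.expectation (rollout q me (Suc n) z) (\<lambda>\<sigma>. g (take (Suc k) \<sigma>))"
    apply simp
    apply (subst pmf_expectation_bind[where A=UNIV], simp, rule fin, simp)
    apply (rule sum.cong, simp)
    apply (subst pmf_expectation_bind[where A=UNIV], simp, simp add: fin_rollout, simp)
    apply (simp only: Y_def real_scaleR_def integral_map_pmf)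
    done
  finally show ?case .
qed

lemma policy_component:
  fixes pol :: "'d::finite \<Rightarrow> 'b pmf"
  assumes F: "\<And>a. pmf M a = (\<Prod>d\<in>UNIV. pmf (pol d) (a d))"
  shows "map_pmf (\<lambda>a. a d) M = pol d"
proof -
  have "M = Pi_pmf UNIV undefined pol"
    by (rule pmf_eqI) (simp add: pmf_Pi F)
  then show ?thesis by (simp add: Pi_pmf_component)
qed

lemma trans_component:
  fixes \<phi> :: "'s::finite \<Rightarrow> 'd::finite \<Rightarrow> 'z::finite" and Q :: "'d \<Rightarrow> 'z pmf"
  assumes P: "\<And>s'. (\<Sum>s''\<in>{s''. \<phi> s'' = \<phi> s'}. pmf M s'') = (\<Prod>d\<in>UNIV. pmf (Q d) (\<phi> s' d))"
  shows "map_pmf (\<lambda>s'. \<phi> s' d) M = Q d"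
proof -
  define PQ where "PQ = Pi_pmf UNIV undefined Q"
  have pPQ: "pmf PQ c = (\<Prod>d\<in>UNIV. pmf (Q d) (c d))" for c
    by (simp add: PQ_def pmf_Pi)
  have le: "pmf (map_pmf \<phi> M) c \<le> pmf PQ c" for c
  proof (cases "c \<in> range \<phi>")
    case True
    then obtain s' where c: "c = \<phi> s'" by auto
    have "pmf (map_pmf \<phi> M) c = (\<Sum>s''\<in>{s''. \<phi> s'' = \<phi> s'}. pmf M s'')"
      unfolding pmf_map c by (subst measure_measure_pmf_finite) (auto simp: vimage_def)
    then show ?thesis using P[of s'] pPQ c by simp
  next
    case False
    then have "pmf (map_pmf \<phi> M) c = 0"
      by (auto simp: pmf_eq_0_set_pmf)
    then show ?thesis by simp
  qed
  have "(\<Sum>c\<in>UNIV. pmf PQ c - pmf (map_pmf \<phi> M) c) = 0"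
    by (simp add: sum_subtractf sum_pmf_eq_1)
  then have "\<forall>c\<in>UNIV. pmf PQ c - pmf (map_pmf \<phi> M) c = 0"
    by (subst sum_nonneg_eq_0_iff[symmetric]) (auto simp: le)
  then have "map_pmf \<phi> M = PQ" by (intro pmf_eqI) simp
  then have "map_pmf (\<lambda>c. c d) (map_pmf \<phi> M) = Q d"
    by (simp add: PQ_def Pi_pmf_component)
  then show ?thesis by (simp add: map_pmf_comp)
qed

definition proj :: "('s \<Rightarrow> 'd \<Rightarrow> 'z) \<Rightarrow> 'd \<Rightarrow> ('s \<times> ('d \<Rightarrow> 'b)) list \<Rightarrow> ('z \<times> 'b) list" where
  "proj \<phi> d \<tau> = map (\<lambda>(s,a). (\<phi> s d, a d)) \<tau>"

lemma proj_rollout: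
  fixes \<phi> :: "'s::finite \<Rightarrow> 'd::finite \<Rightarrow> 'z::finite"
    and p :: "'s \<Rightarrow> ('d \<Rightarrow> 'b::finite) \<Rightarrow> 's pmf"
    and pd :: "'d \<Rightarrow> 'z \<Rightarrow> 'b \<Rightarrow> 'z pmf"
    and pol :: "'s \<Rightarrow> ('d \<Rightarrow> 'b) pmf" and pold :: "'d \<Rightarrow> 'z \<Rightarrow> 'b pmf"
  assumes P: "\<And>s s' a. (\<Sum>s''\<in>{s''. \<phi> s'' = \<phi> s'}. pmf (p s a) s'')
                = (\<Prod>d\<in>UNIV. pmf (pd d (\<phi> s d) (a d)) (\<phi> s' d))"
    and F: "\<And>s a. pmf (pol s) a = (\<Prod>d\<in>UNIV. pmf (pold d (\<phi> s d)) (a d))"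
  shows "map_pmf (proj \<phi> d) (rollout p pol n s) = rollout (pd d) (pold d) n (\<phi> s d)"
proof (induction n arbitrary: s)
  case 0
  have "map_pmf (proj \<phi> d) (rollout p pol 0 s) = map_pmf (\<lambda>b. [(\<phi> s d, b)]) (map_pmf (\<lambda>a. a d) (pol s))"
    by (simp add: map_pmf_comp proj_def)
  also have "\<dots> = rollout (pd d) (pold d) 0 (\<phi> s d)"
    by (simp add: policy_component[OF F])
  finally show ?case .
next
  case (Suc n)
  have tc: "map_pmf (\<lambda>s'. \<phi> s' d) (p s a) = pd d (\<phi> s d) (a d)" for a
    by (rule trans_component) (rule P)
  have "map_pmf (proj \<phi> d) (rollout p pol (Suc n) s)
     = bind_pmf (pol s) (\<lambda>a. bind_pmf (p s a) (\<lambda>s'.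
         map_pmf (\<lambda>rest. (\<phi> s d, a d) # rest) (map_pmf (proj \<phi> d) (rollout p pol n s'))))"
    by (simp add: map_bind_pmf map_pmf_comp proj_def)
  also have "\<dots> = bind_pmf (pol s) (\<lambda>a. bind_pmf (map_pmf (\<lambda>s'. \<phi> s' d) (p s a)) (\<lambda>z'.
         map_pmf (\<lambda>rest. (\<phi> s d, a d) # rest) (rollout (pd d) (pold d) n z')))"
    by (simp add: Suc.IH bind_map_pmf)
  also have "\<dots> = bind_pmf (map_pmf (\<lambda>a. a d) (pol s)) (\<lambda>b. bind_pmf (pd d (\<phi> s d) b) (\<lambda>z'.
         map_pmf (\<lambda>rest. (\<phi> s d, b) # rest) (rollout (pd d) (pold d) n z')))"
    by (simp add: tc bind_map_pmf)
  also have "\<dots> = rollout (pd d) (pold d) (Suc n) (\<phi> s d)"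
    by (simp add: policy_component[OF F])
  finally show ?case .
qed

lemma key:
  fixes d1 :: "'s::finite pmf"
    and p :: "'s \<Rightarrow> ('d::finite \<Rightarrow> 'b::finite) \<Rightarrow> 's pmf"
    and \<phi> :: "'s \<Rightarrow> 'd \<Rightarrow> 'z::finite"
    and rd :: "'d \<Rightarrow> 'z \<Rightarrow> 'b \<Rightarrow> real"
    and pd :: "'d \<Rightarrow> 'z \<Rightarrow> 'b \<Rightarrow> 'z pmf"
    and pib pie :: "'s \<Rightarrow> ('d \<Rightarrow> 'b) pmf"
    and pibd pied :: "'d \<Rightarrow> 'z \<Rightarrow> 'b pmf"
  assumes P: "\<And>s s' a. (\<Sum>s''\<in>{s''. \<phi> s'' = \<phi> s'}. pmf (p s a) s'')
                = (\<Prod>d\<in>UNIV. pmf (pd d (\<phi> s d) (a d)) (\<phi> s' d))"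
    and Fb: "\<And>s a. pmf (pib s) a = (\<Prod>d\<in>UNIV. pmf (pibd d (\<phi> s d)) (a d))"
    and Fe: "\<And>s a. pmf (pie s) a = (\<Prod>d\<in>UNIV. pmf (pied d (\<phi> s d)) (a d))"
    and AC: "\<And>d z b. pmf (pibd d z) b = 0 \<Longrightarrow> pmf (pied d z) b = 0"
    and tk: "t \<le> k" "k \<le> T"
  shows "measure_pmf.expectation (traj d1 p pib T)
           (\<lambda>\<tau>. ratio pibd pied \<phi> \<tau> d k * rd d (\<phi> (fst (\<tau> ! t)) d) (snd (\<tau> ! t) d))
       = measure_pmf.expectation (traj d1 p pie T)
           (\<lambda>\<tau>. rd d (\<phi> (fst (\<tau> ! t)) d) (snd (\<tau> ! t) d))"
proof -
  define h where "h \<sigma> = rd d (fst (\<sigma> ! t)) (snd (\<sigma> ! t))" for \<sigma> :: "('z \<times> 'b) list"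
  have hp: "h (take (Suc k) (proj \<phi> d \<tau>)) = rd d (\<phi> (fst (\<tau> ! t)) d) (snd (\<tau> ! t) d)"
    if "length \<tau> = Suc T" for \<tau> :: "('s \<times> ('d \<Rightarrow> 'b)) list"
    using that tk by (simp add: h_def proj_def case_prod_beta)
  have rp: "ratio pibd pied \<phi> \<tau> d k = W (pibd d) (pied d) (proj \<phi> d \<tau>) k"
    if "length \<tau> = Suc T" for \<tau> :: "('s \<times> ('d \<Rightarrow> 'b)) list"
    unfolding ratio_def W_def
    by (rule prod.cong) (use that tk in \<open>auto simp: proj_def case_prod_beta\<close>)
  have "measure_pmf.expectation (rollout p pib T s)
           (\<lambda>\<tau>. ratio pibd pied \<phi> \<tau> d k * rd d (\<phi> (fst (\<tau> ! t)) d) (snd (\<tau> ! t) d))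
      = measure_pmf.expectation (rollout p pie T s)
           (\<lambda>\<tau>. rd d (\<phi> (fst (\<tau> ! t)) d) (snd (\<tau> ! t) d))" for s
  proof -
    have "measure_pmf.expectation (rollout p pib T s)
           (\<lambda>\<tau>. ratio pibd pied \<phi> \<tau> d k * rd d (\<phi> (fst (\<tau> ! t)) d) (snd (\<tau> ! t) d))
       = measure_pmf.expectation (rollout p pib T s)
           (\<lambda>\<tau>. (\<lambda>\<sigma>. W (pibd d) (pied d) \<sigma> k * h (take (Suc k) \<sigma>)) (proj \<phi> d \<tau>))"
      by (rule exp_cong) (simp add: hp rp len_rollout)
    also have "\<dots> = measure_pmf.expectation (map_pmf (proj \<phi> d) (rollout p pib T s))
           (\<lambda>\<sigma>. W (pibd d) (pied d) \<sigma> k * h (take (Suc k) \<sigma>))"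
      by simp
    also have "\<dots> = measure_pmf.expectation (rollout (pd d) (pibd d) T (\<phi> s d))
           (\<lambda>\<sigma>. W (pibd d) (pied d) \<sigma> k * h (take (Suc k) \<sigma>))"
      by (simp only: proj_rollout[where \<phi>=\<phi> and p=p and pd=pd and pol=pib and pold=pibd, OF P Fb])
    also have "\<dots> = measure_pmf.expectation (rollout (pd d) (pied d) T (\<phi> s d))
           (\<lambda>\<sigma>. h (take (Suc k) \<sigma>))"
      by (rule IS) (use AC tk in auto)
    also have "\<dots> = measure_pmf.expectation (map_pmf (proj \<phi> d) (rollout p pie T s))
           (\<lambda>\<sigma>. h (take (Suc k) \<sigma>))"
      by (simp only: proj_rollout[where \<phi>=\<phi> and p=p and pd=pd and pol=pie and pold=pied, OF P Fe])
    also have "\<dots> = measure_pmf.expectation (rollout p pie T s)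
           (\<lambda>\<tau>. rd d (\<phi> (fst (\<tau> ! t)) d) (snd (\<tau> ! t) d))"
      unfolding integral_map_pmf by (rule exp_cong) (simp add: hp len_rollout)
    finally show ?thesis .
  qed
  then show ?thesis
    unfolding traj_def
    apply (subst pmf_expectation_bind[where A=UNIV], simp, simp add: fin_rollout, simp)+
    apply simp
    done
qed

lemma sum_Pi:
  fixes f :: "'a \<Rightarrow> real"
  assumes fin: "finite (set_pmf M)"
  shows "measure_pmf.expectation (Pi_pmf {..<N} dflt (\<lambda>_. M)) (\<lambda>Ds. \<Sum>n<N. f (Ds n))
       = real N * measure_pmf.expectation M f"
proof -
  have comp: "map_pmf (\<lambda>Ds. Ds n) (Pi_pmf {..<N} dflt (\<lambda>_. M)) = M" if "n < N" for n
    using that by (simp add: Pi_pmf_component)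
  have int: "integrable (Pi_pmf {..<N} dflt (\<lambda>_. M)) (\<lambda>Ds. f (Ds n))" if "n < N" for n
  proof -
    have "integrable (map_pmf (\<lambda>Ds. Ds n) (Pi_pmf {..<N} dflt (\<lambda>_. M))) f"
      using that comp fin by (simp add: integrable_measure_pmf_finite)
    then show ?thesis by simp
  qed
  have "measure_pmf.expectation (Pi_pmf {..<N} dflt (\<lambda>_. M)) (\<lambda>Ds. \<Sum>n<N. f (Ds n))
      = (\<Sum>n<N. measure_pmf.expectation (Pi_pmf {..<N} dflt (\<lambda>_. M)) (\<lambda>Ds. f (Ds n)))"
    by (rule Bochner_Integration.integral_sum) (use int in auto)
  also have "\<dots> = (\<Sum>n<N. measure_pmf.expectation M f)"
  proof (rule sum.cong)
    fix n assume "n \<in> {..<N}"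
    then have "measure_pmf.expectation (map_pmf (\<lambda>Ds. Ds n) (Pi_pmf {..<N} dflt (\<lambda>_. M))) f
       = measure_pmf.expectation M f" using comp by simp
    then show "measure_pmf.expectation (Pi_pmf {..<N} dflt (\<lambda>_. M)) (\<lambda>Ds. f (Ds n))
       = measure_pmf.expectation M f" by simp
  qed simp
  finally show ?thesis by simp
qed

lemma est:
  fixes d1 :: "'s::finite pmf"
    and p :: "'s \<Rightarrow> ('d::finite \<Rightarrow> 'b::finite) \<Rightarrow> 's pmf"
    and r :: "'s \<Rightarrow> ('d \<Rightarrow> 'b) \<Rightarrow> real"
    and \<phi> :: "'s \<Rightarrow> 'd \<Rightarrow> 'z::finite"
    and rd :: "'d \<Rightarrow> 'z \<Rightarrow> 'b \<Rightarrow> real"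
    and pd :: "'d \<Rightarrow> 'z \<Rightarrow> 'b \<Rightarrow> 'z pmf"
    and pib pie :: "'s \<Rightarrow> ('d \<Rightarrow> 'b) pmf"
    and pibd pied :: "'d \<Rightarrow> 'z \<Rightarrow> 'b pmf"
    and \<gamma> :: real and T N :: nat
  assumes N: "N \<ge> 1"
    and R: "\<And>s a. r s a = (\<Sum>d\<in>UNIV. rd d (\<phi> s d) (a d))"
    and P: "\<And>s s' a. (\<Sum>s''\<in>{s''. \<phi> s'' = \<phi> s'}. pmf (p s a) s'')
                = (\<Prod>d\<in>UNIV. pmf (pd d (\<phi> s d) (a d)) (\<phi> s' d))"
    and Fb: "\<And>s a. pmf (pib s) a = (\<Prod>d\<in>UNIV. pmf (pibd d (\<phi> s d)) (a d))"
    and Fe: "\<And>s a. pmf (pie s) a = (\<Prod>d\<in>UNIV. pmf (pied d (\<phi> s d)) (a d))"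
    and AC: "\<And>d z b. pmf (pibd d z) b = 0 \<Longrightarrow> pmf (pied d z) b = 0"
    and kf: "\<And>t. t \<le> T \<Longrightarrow> t \<le> kf t \<and> kf t \<le> T"
  shows "measure_pmf.expectation (Pi_pmf {..<N} [] (\<lambda>_. traj d1 p pib T))
      (\<lambda>Ds. \<Sum>d\<in>UNIV. 1 / real N * (\<Sum>n<N. \<Sum>t\<le>T.
      \<gamma> ^ t * ratio pibd pied \<phi> (Ds n) d (kf t) *
      rd d (\<phi> (fst (Ds n ! t)) d) (snd (Ds n ! t) d))) = value_fn d1 p r \<gamma> T pie"
proof -
  have fin: "finite (set_pmf (traj d1 p pol T))" for pol :: "'s \<Rightarrow> ('d \<Rightarrow> 'b) pmf"
    by (auto simp: traj_def set_bind_pmf fin_rollout)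
  define f where "f \<tau> = 1 / real N * (\<Sum>d\<in>UNIV. \<Sum>t\<le>T.
      \<gamma> ^ t * (ratio pibd pied \<phi> \<tau> d (kf t) * rd d (\<phi> (fst (\<tau> ! t)) d) (snd (\<tau> ! t) d)))" for \<tau>
  have "(\<lambda>Ds. \<Sum>d\<in>UNIV. 1 / real N * (\<Sum>n<N. \<Sum>t\<le>T.
      \<gamma> ^ t * ratio pibd pied \<phi> (Ds n) d (kf t) *
      rd d (\<phi> (fst (Ds n ! t)) d) (snd (Ds n ! t) d))) = (\<lambda>Ds. \<Sum>n<N. f (Ds n))"
    unfolding f_def
    by (auto simp: sum_distrib_left mult.assoc intro!: ext sum.swap[THEN trans])
  then have "measure_pmf.expectation (Pi_pmf {..<N} [] (\<lambda>_. traj d1 p pib T))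
      (\<lambda>Ds. \<Sum>d\<in>UNIV. 1 / real N * (\<Sum>n<N. \<Sum>t\<le>T.
      \<gamma> ^ t * ratio pibd pied \<phi> (Ds n) d (kf t) *
      rd d (\<phi> (fst (Ds n ! t)) d) (snd (Ds n ! t) d)))
      = real N * measure_pmf.expectation (traj d1 p pib T) f"
    using sum_Pi[OF fin] by simp
  also have "measure_pmf.expectation (traj d1 p pib T) f = 1 / real N * (\<Sum>d\<in>UNIV. \<Sum>t\<le>T.
      \<gamma> ^ t * measure_pmf.expectation (traj d1 p pib T)
        (\<lambda>\<tau>. ratio pibd pied \<phi> \<tau> d (kf t) * rd d (\<phi> (fst (\<tau> ! t)) d) (snd (\<tau> ! t) d)))"
    unfolding f_def
    by (simp add: Bochner_Integration.integral_sum integrable_measure_pmf_finite[OF fin])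
  also have "\<dots> = 1 / real N * (\<Sum>d\<in>UNIV. \<Sum>t\<le>T.
      \<gamma> ^ t * measure_pmf.expectation (traj d1 p pie T)
        (\<lambda>\<tau>. rd d (\<phi> (fst (\<tau> ! t)) d) (snd (\<tau> ! t) d)))"
    using key[where \<phi>=\<phi> and p=p and pd=pd and pib=pib and pie=pie and pibd=pibd and pied=pied, OF P Fb Fe AC] kf by simp
  also have "(\<Sum>d\<in>UNIV. \<Sum>t\<le>T.
      \<gamma> ^ t * measure_pmf.expectation (traj d1 p pie T)
        (\<lambda>\<tau>. rd d (\<phi> (fst (\<tau> ! t)) d) (snd (\<tau> ! t) d)))
      = value_fn d1 p r \<gamma> T pie"
  proof -
    have "value_fn d1 p r \<gamma> T pie = measure_pmf.expectation (traj d1 p pie T)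
      (\<lambda>\<tau>. \<Sum>d\<in>UNIV. \<Sum>t\<le>T. \<gamma> ^ t * rd d (\<phi> (fst (\<tau> ! t)) d) (snd (\<tau> ! t) d))"
      unfolding value_fn_def R
      by (auto simp: sum_distrib_left intro!: arg_cong[where f="measure_pmf.expectation _"] ext sum.swap)
    also have "\<dots> = (\<Sum>d\<in>UNIV. \<Sum>t\<le>T.
      \<gamma> ^ t * measure_pmf.expectation (traj d1 p pie T)
        (\<lambda>\<tau>. rd d (\<phi> (fst (\<tau> ! t)) d) (snd (\<tau> ! t) d)))"
      by (simp add: Bochner_Integration.integral_sum integrable_measure_pmf_finite[OF fin])
    finally show ?thesis by simp
  qed
  finally show ?thesis using N by simp
qed

theorem theorem2:
  fixes d1 :: "'s::finite pmf"
    and p :: "'s \<Rightarrow> ('d::finite \<Rightarrow> 'b::finite) \<Rightarrow> 's pmf"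
    and r :: "'s \<Rightarrow> ('d \<Rightarrow> 'b) \<Rightarrow> real"
    and \<phi> :: "'s \<Rightarrow> 'd \<Rightarrow> 'z::finite"
    and rd :: "'d \<Rightarrow> 'z \<Rightarrow> 'b \<Rightarrow> real"
    and pd :: "'d \<Rightarrow> 'z \<Rightarrow> 'b \<Rightarrow> 'z pmf"
    and pib pie :: "'s \<Rightarrow> ('d \<Rightarrow> 'b) pmf"
    and pibd pied :: "'d \<Rightarrow> 'z \<Rightarrow> 'b pmf"
    and \<gamma> :: real and T N :: nat
  assumes gamma: "0 \<le> \<gamma>" "\<gamma> \<le> 1"
    and N: "N \<ge> 1"
    and R: "\<And>s a. r s a = (\<Sum>d\<in>UNIV. rd d (\<phi> s d) (a d))"
    and P: "\<And>s s' a. (\<Sum>s''\<in>{s''. \<phi> s'' = \<phi> s'}. pmf (p s a) s'')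
                = (\<Prod>d\<in>UNIV. pmf (pd d (\<phi> s d) (a d)) (\<phi> s' d))"
    and Fb: "\<And>s a. pmf (pib s) a = (\<Prod>d\<in>UNIV. pmf (pibd d (\<phi> s d)) (a d))"
    and Fe: "\<And>s a. pmf (pie s) a = (\<Prod>d\<in>UNIV. pmf (pied d (\<phi> s d)) (a d))"
    and AC: "\<And>d z b. pmf (pibd d z) b = 0 \<Longrightarrow> pmf (pied d z) b = 0"
  shows "measure_pmf.expectation (Pi_pmf {..<N} [] (\<lambda>_. traj d1 p pib T))
           (DecIS pibd pied \<phi> rd \<gamma> T N) = value_fn d1 p r \<gamma> T pie
       \<and> measure_pmf.expectation (Pi_pmf {..<N} [] (\<lambda>_. traj d1 p pib T))
           (DecPDIS pibd pied \<phi> rd \<gamma> T N) = value_fn d1 p r \<gamma> T pie"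
proof
  show "measure_pmf.expectation (Pi_pmf {..<N} [] (\<lambda>_. traj d1 p pib T))
           (DecIS pibd pied \<phi> rd \<gamma> T N) = value_fn d1 p r \<gamma> T pie"
    unfolding DecIS_def[abs_def]
    using est[where \<phi>=\<phi> and p=p and pd=pd and pib=pib and pie=pie and pibd=pibd and pied=pied and N=N and r=r and rd=rd and T=T and kf="\<lambda>_. T" and ?d1.0=d1 and \<gamma>=\<gamma>, OF N R P Fb Fe AC] by simp
next
  show "measure_pmf.expectation (Pi_pmf {..<N} [] (\<lambda>_. traj d1 p pib T))
           (DecPDIS pibd pied \<phi> rd \<gamma> T N) = value_fn d1 p r \<gamma> T pie"
    unfolding DecPDIS_def[abs_def]
    using est[where \<phi>=\<phi> and p=p and pd=pd and pib=pib and pie=pie and pibd=pibd and pied=pied and N=N and r=r and rd=rd and T=T and kf="\<lambda>t. t" and ?d1.0=d1 and \<gamma>=\<gamma>, OF N R P Fb Fe AC] by simp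
qed

end
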